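(* Let $n,r\ge 1$ and let $D=\{(\mathbf s_1,\mathbf t_1),\dots,(\mathbf s_r,\mathbf t_r)\}\subset \mathbb F_2^n\times\mathbb F_2^n$ be a data set, with $\mathbf s_j=(s_{j,1},\dots,s_{j,n})$ and $\mathbf t_j=(t_{j,1},\dots,t_{j,n})$. Fix a gene index $i\in\{1,\dots,n\}$. Put $$f_i=\sum_{j=1}^r t_{j,i}\prod_{e=1}^n\bigl(1-(x_e-s_{j,e})\bigr),\qquad p=\prod_{j=1}^r\Bigl(1-\prod_{e=1}^n\bigl(1-(x_e-s_{j,e})\bigr)\Bigr),$$ and let $I=\langle p\rangle$ in $R=\mathbb F_2[x_1,\dots,x_n]/\langle x_e^2-x_e: 1\le e\le n\rangle$; this $I$ is the ideal of Boolean polynomials vanishing on $\{\mathbf s_1,\dots,\mathbf s_r\}$, so $f_i+I$ is the set of Boolean functions $h$ with $h(\mathbf s_j)=t_{j,i}$ for all $j$. Introduce indeterminates $b_H$, $H\subseteq[n]$, let $g=\sum_{H\subseteq[n]}b_H\prod_{l\in H}x_l$, and write the reduction of $f_i+g\,p$ modulo $\langle x_e^2-x_e\rangle$ as $\sum_{S\subseteq[n]}W_S\prod_{l\in S}x_l$, where each $W_S=W_S(b_H,\mathbf s_j,\mathbf t_j)$ is a polynomial (affine-linear over $\mathbb F_2$) in the $b_H$. Consider the ring homomorphism $$\Phi:\overline{\mathbb F}_2[\{c_S:S\subseteq[n]\}]\to\overline{\mathbb F}_2[\{b_H:H\subseteq[n]\}],\qquad c_S\mapsto W_S .$$ Then $\ker(\Phi)$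 is the ideal of all polynomials that fit the data set $D$ (i.e. the vanishing ideal of the set of coefficient vectors $(W_S)_S$ obtained as the $b_H$ vary); in particular, the $\mathbb F_2$-rational points of the variety $\mathbb V(\ker\Phi)\subseteq\overline{\mathbb F}_2^{\,2^n}$, identified with Boolean polynomials via $(c_S)_{S\subseteq[n]}\leftrightarrow\sum_S c_S\prod_{l\in S}x_l$, are exactly the models fitting $D$, namely the elements of $f_i+I$.
   Context: Boolean functions $\mathbb F_2^n\to\mathbb F_2$ are identified with elements of $R=\mathbb F_2[x_1,\dots,x_n]/\langle x_e^2-x_e\rangle$, each written uniquely as $\sum_{S\subseteq[n]}c_S\prod_{l\in S}x_l$ with $c_S\in\mathbb F_2$, and hence with vectors $(c_S)_{S\subseteq[n]}\in\mathbb F_2^{2^n}$. $[n]=\{1,\dots,n\}$. $\overline{\mathbb F}_2$ is the algebraic closure of $\mathbb F_2$. A model for gene $i$ "fits" $D$ if it maps $\mathbf s_j$ to $t_{j,i}$ for every $j$. *)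

theory Defs
  imports "HOL-Library.Poly_Mapping" "HOL-Library.Z2" "HOL-Algebra.Algebraic_Closure_Type"
begin

type_synonym ('v, 'k) mpoly = "('v \<Rightarrow>\<^sub>0 nat) \<Rightarrow>\<^sub>0 'k"

definition mvar :: "'v \<Rightarrow> ('v, 'k::comm_semiring_1) mpoly" where
  "mvar v = Poly_Mapping.single (Poly_Mapping.single v 1) 1"

definition mconst :: "'k \<Rightarrow> ('v, 'k::zero) mpoly" where
  "mconst c = Poly_Mapping.single 0 c"

definition mvars :: "('v, 'k::zero) mpoly \<Rightarrow> 'v set" where
  "mvars P = (\<Union>m\<in>Poly_Mapping.keys P. Poly_Mapping.keys m)"

text \<open>With phi = mconst this is the substitution
homomorphism of polynomial rings; with phi = id it is evaluation at a point.\<close>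
definition mhom :: "('k \<Rightarrow> 'b::comm_semiring_1) \<Rightarrow> ('v \<Rightarrow> 'b) \<Rightarrow> ('v, 'k::zero) mpoly \<Rightarrow> 'b" where
  "mhom phi sigma P = (\<Sum>m\<in>Poly_Mapping.keys P. phi (Poly_Mapping.lookup P m) * (\<Prod>v\<in>Poly_Mapping.keys m. sigma v ^ Poly_Mapping.lookup m v))"

text \<open>An element of R with coefficients in a commutative ring 'a is represented by its
coefficient vector (c_S), S a subset of {1..n}, standing for sum_S c_S prod_{l in S} x_l.
Entries at sets S not contained in {1..n} are irrelevant.\<close>

definition bconst :: "'a::comm_ring_1 \<Rightarrow> nat set \<Rightarrow> 'a" where
  "bconst c = (\<lambda>S. if S = {} then c else 0)"

definition bvar :: "nat \<Rightarrow> nat set \<Rightarrow> 'a::comm_ring_1" where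
  "bvar e = (\<lambda>S. if S = {e} then 1 else 0)"

definition badd :: "(nat set \<Rightarrow> 'a::comm_ring_1) \<Rightarrow> (nat set \<Rightarrow> 'a) \<Rightarrow> nat set \<Rightarrow> 'a" where
  "badd u v = (\<lambda>S. u S + v S)"

definition bsub :: "(nat set \<Rightarrow> 'a::comm_ring_1) \<Rightarrow> (nat set \<Rightarrow> 'a) \<Rightarrow> nat set \<Rightarrow> 'a" where
  "bsub u v = (\<lambda>S. u S - v S)"

text \<open>Multiplication in R: x_A * x_B = x_(A union B) (since x_e^2 = x_e).\<close>
definition bmul :: "nat \<Rightarrow> (nat set \<Rightarrow> 'a::comm_ring_1) \<Rightarrow> (nat set \<Rightarrow> 'a) \<Rightarrow> nat set \<Rightarrow> 'a" where
  "bmul n u v = (\<lambda>S. \<Sum>A\<in>Pow {1..n}. \<Sum>B\<in>Pow {1..n}. if A \<union> B = S then u A * v B else 0)"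

definition bprod :: "nat \<Rightarrow> (nat \<Rightarrow> nat set \<Rightarrow> 'a::comm_ring_1) \<Rightarrow> nat list \<Rightarrow> nat set \<Rightarrow> 'a" where
  "bprod n F xs = foldr (\<lambda>j acc. bmul n (F j) acc) xs (bconst 1)"

definition beval :: "nat \<Rightarrow> (nat set \<Rightarrow> 'a::comm_ring_1) \<Rightarrow> (nat \<Rightarrow> 'a) \<Rightarrow> 'a" where
  "beval n h x = (\<Sum>S\<in>Pow {1..n}. h S * (\<Prod>l\<in>S. x l))"

text \<open>Data: s j e = s_{j,e}, t j e = t_{j,e} for j in {1..r}, e in {1..n}; iota embeds F_2
into the coefficient ring.\<close>

definition indic :: "nat \<Rightarrow> (bit \<Rightarrow> 'a::comm_ring_1) \<Rightarrow> (nat \<Rightarrow> nat \<Rightarrow> bit) \<Rightarrow> nat \<Rightarrow> nat set \<Rightarrow> 'a" where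
  "indic n iota s j = bprod n (\<lambda>e. bsub (bconst 1) (bsub (bvar e) (bconst (iota (s j e))))) [1..<n+1]"

definition fpoly :: "nat \<Rightarrow> nat \<Rightarrow> (bit \<Rightarrow> 'a::comm_ring_1) \<Rightarrow> (nat \<Rightarrow> nat \<Rightarrow> bit) \<Rightarrow> (nat \<Rightarrow> nat \<Rightarrow> bit) \<Rightarrow> nat \<Rightarrow> nat set \<Rightarrow> 'a" where
  "fpoly n r iota s t i = (\<lambda>S. \<Sum>j\<in>{1..r}. iota (t j i) * indic n iota s j S)"

definition ppoly :: "nat \<Rightarrow> nat \<Rightarrow> (bit \<Rightarrow> 'a::comm_ring_1) \<Rightarrow> (nat \<Rightarrow> nat \<Rightarrow> bit) \<Rightarrow> nat set \<Rightarrow> 'a" where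
  "ppoly n r iota s = bprod n (\<lambda>j. bsub (bconst 1) (indic n iota s j)) [1..<r+1]"

type_synonym F2bar = "bit alg_closure"

definition gpoly :: "nat \<Rightarrow> nat set \<Rightarrow> (nat set, F2bar) mpoly" where
  "gpoly n = (\<lambda>H. if H \<subseteq> {1..n} then mvar H else 0)"

definition Wpoly :: "nat \<Rightarrow> nat \<Rightarrow> (nat \<Rightarrow> nat \<Rightarrow> bit) \<Rightarrow> (nat \<Rightarrow> nat \<Rightarrow> bit) \<Rightarrow> nat \<Rightarrow> nat set \<Rightarrow> (nat set, F2bar) mpoly" where
  "Wpoly n r s t i = badd (fpoly n r (mconst \<circ> to_ac) s t i)
                          (bmul n (gpoly n) (ppoly n r (mconst \<circ> to_ac) s))"

definition Phi :: "nat \<Rightarrow> nat \<Rightarrow> (nat \<Rightarrow> nat \<Rightarrow> bit) \<Rightarrow> (nat \<Rightarrow> nat \<Rightarrow> bit) \<Rightarrow> nat \<Rightarrow> (nat set, F2bar) mpoly \<Rightarrow> (nat set, F2bar) mpoly" where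
  "Phi n r s t i = mhom mconst (Wpoly n r s t i)"

definition cring_carrier :: "nat \<Rightarrow> (nat set, F2bar) mpoly set" where
  "cring_carrier n = {P. mvars P \<subseteq> Pow {1..n}}"

definition kerPhi :: "nat \<Rightarrow> nat \<Rightarrow> (nat \<Rightarrow> nat \<Rightarrow> bit) \<Rightarrow> (nat \<Rightarrow> nat \<Rightarrow> bit) \<Rightarrow> nat \<Rightarrow> (nat set, F2bar) mpoly set" where
  "kerPhi n r s t i = {P \<in> cring_carrier n. Phi n r s t i P = 0}"

end

theory Submission
  imports Defs "HOL-Computational_Algebra.Polynomial"
begin


definition mon :: "('v \<Rightarrow> 'b::comm_semiring_1) \<Rightarrow> ('v \<Rightarrow>\<^sub>0 nat) \<Rightarrow> 'b" where
  "mon \<sigma> m = (\<Prod>v\<in>Poly_Mapping.keys m. \<sigma> v ^ Poly_Mapping.lookup m v)"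

lemma mon_superset:
  assumes "finite V" "Poly_Mapping.keys m \<subseteq> V"
  shows "mon \<sigma> m = (\<Prod>v\<in>V. \<sigma> v ^ Poly_Mapping.lookup m v)"
  unfolding mon_def
  by (rule prod.mono_neutral_left[OF assms]) (auto simp: in_keys_iff)

lemma keys_add_nat: "Poly_Mapping.keys (a + b :: 'v \<Rightarrow>\<^sub>0 nat) = Poly_Mapping.keys a \<union> Poly_Mapping.keys b"
  by (auto simp: in_keys_iff lookup_add)

lemma mon_add: "mon \<sigma> (a + b) = mon \<sigma> a * mon \<sigma> b"
proof -
  let ?V = "Poly_Mapping.keys a \<union> Poly_Mapping.keys b"
  have "mon \<sigma> (a + b) = (\<Prod>v\<in>?V. \<sigma> v ^ Poly_Mapping.lookup (a+b) v)"
    by (rule mon_superset) (auto simp: keys_add_nat)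
  also have "\<dots> = (\<Prod>v\<in>?V. \<sigma> v ^ Poly_Mapping.lookup a v) * (\<Prod>v\<in>?V. \<sigma> v ^ Poly_Mapping.lookup b v)"
    by (simp add: lookup_add power_add prod.distrib)
  also have "\<dots> = mon \<sigma> a * mon \<sigma> b"
    by (simp add: mon_superset[of ?V a] mon_superset[of ?V b])
  finally show ?thesis .
qed

lemma mon_zero [simp]: "mon \<sigma> 0 = 1"
  by (simp add: mon_def)

definition ev :: "('v \<Rightarrow> 'b::comm_semiring_1) \<Rightarrow> ('v, 'b) mpoly \<Rightarrow> 'b" where
  "ev \<sigma> P = mhom id \<sigma> P"

lemma ev_def': "ev \<sigma> P = (\<Sum>m\<in>Poly_Mapping.keys P. Poly_Mapping.lookup P m * mon \<sigma> m)"
  by (simp add: ev_def mhom_def mon_def)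

lemma mhom_superset:
  assumes "finite K" "Poly_Mapping.keys P \<subseteq> K"
  shows "ev \<sigma> P = (\<Sum>m\<in>K. Poly_Mapping.lookup P m * mon \<sigma> m)"
  unfolding ev_def'
  by (rule sum.mono_neutral_left[OF assms]) (auto simp: in_keys_iff)

lemma mhom_add: "ev \<sigma> (p + q) = ev \<sigma> p + ev \<sigma> (q :: ('v,'b::comm_semiring_1) mpoly)"
proof -
  let ?K = "Poly_Mapping.keys p \<union> Poly_Mapping.keys q"
  have "ev \<sigma> (p + q) = (\<Sum>m\<in>?K. Poly_Mapping.lookup (p+q) m * mon \<sigma> m)"
    by (rule mhom_superset) (use keys_add[of p q] in auto)
  also have "\<dots> = ev \<sigma> p + ev \<sigma> q"
    by (simp add: lookup_add distrib_right sum.distrib mhom_superset[of ?K p] mhom_superset[of ?K q])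
  finally show ?thesis .
qed

lemma mhom_zero [simp]: "ev \<sigma> 0 = 0"
  by (simp add: ev_def mhom_def)

lemma mhom_single [simp]: "ev \<sigma> (Poly_Mapping.single m c) = c * mon \<sigma> m"
  by (simp add: ev_def')

lemma mhom_sum: "ev \<sigma> (\<Sum>x\<in>A. f x) = (\<Sum>x\<in>A. ev \<sigma> (f x :: ('v,'b::comm_semiring_1) mpoly))"
  by (induction A rule: infinite_finite_induct) (auto simp: mhom_add)

lemma mpoly_decomp: "p = (\<Sum>m\<in>Poly_Mapping.keys p. Poly_Mapping.single m (Poly_Mapping.lookup p m))"
proof (rule poly_mapping_eqI)
  fix k
  show "Poly_Mapping.lookup p k = Poly_Mapping.lookup (\<Sum>m\<in>Poly_Mapping.keys p. Poly_Mapping.single m (Poly_Mapping.lookup p m)) k"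
    by (auto simp: lookup_sum lookup_single when_def in_keys_iff sum.delta)
qed

lemma mhom_mult: "ev \<sigma> (p * q) = ev \<sigma> p * ev \<sigma> (q :: ('v,'b::comm_semiring_1) mpoly)"
proof -
  have "p * q = (\<Sum>a\<in>Poly_Mapping.keys p. Poly_Mapping.single a (Poly_Mapping.lookup p a)) *
                (\<Sum>b\<in>Poly_Mapping.keys q. Poly_Mapping.single b (Poly_Mapping.lookup q b))"
    using mpoly_decomp[of p] mpoly_decomp[of q] by simp
  also have "\<dots> = (\<Sum>a\<in>Poly_Mapping.keys p. \<Sum>b\<in>Poly_Mapping.keys q.
       Poly_Mapping.single (a + b) (Poly_Mapping.lookup p a * Poly_Mapping.lookup q b))"
    by (simp add: sum_distrib_left sum_distrib_right mult_single sum.swap[of _ "Poly_Mapping.keys q"])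
  finally have "ev \<sigma> (p * q) = (\<Sum>a\<in>Poly_Mapping.keys p. \<Sum>b\<in>Poly_Mapping.keys q.
       (Poly_Mapping.lookup p a * mon \<sigma> a) * (Poly_Mapping.lookup q b * mon \<sigma> b))"
    by (simp add: mhom_sum mon_add mult_ac)
  also have "\<dots> = ev \<sigma> p * ev \<sigma> q"
    by (simp add: ev_def' sum_distrib_left sum_distrib_right) (rule sum.swap)
  finally show ?thesis .
qed

lemma mhom_one [simp]: "ev \<sigma> (1 :: ('v,'b::comm_semiring_1) mpoly) = 1"
proof -
  have "(1 :: ('v,'b) mpoly) = Poly_Mapping.single 0 1" by simp
  then show ?thesis by (metis mhom_single mon_zero mult_1)
qed

lemma mhom_prod: "ev \<sigma> (\<Prod>x\<in>A. f x) = (\<Prod>x\<in>A. ev \<sigma> (f x :: ('v,'b::comm_semiring_1) mpoly))"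
  by (induction A rule: infinite_finite_induct) (auto simp: mhom_mult)

lemma mhom_power: "ev \<sigma> (p ^ k) = ev \<sigma> (p :: ('v,'b::comm_semiring_1) mpoly) ^ k"
  by (induction k) (auto simp: mhom_mult)

lemma mhom_uminus: "ev \<sigma> (- p) = - ev \<sigma> (p :: ('v,'b::comm_ring_1) mpoly)"
  using mhom_add[of \<sigma> "-p" p] by (simp add: eq_neg_iff_add_eq_0)

lemma mhom_diff: "ev \<sigma> (p - q) = ev \<sigma> p - ev \<sigma> (q :: ('v,'b::comm_ring_1) mpoly)"
  using mhom_add[of \<sigma> p "-q"] mhom_uminus[of \<sigma> q] by simp

lemma mhom_mconst [simp]: "ev \<sigma> (mconst c) = c"
  by (simp add: mconst_def)

lemma mhom_mvar [simp]: "ev \<sigma> (mvar v :: ('v,'b::comm_semiring_1) mpoly) = \<sigma> v"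
  by (simp add: mvar_def mon_def)

lemma mhom_comp:
  "ev b (mhom mconst W P) = ev (\<lambda>S. ev b (W S)) (P :: ('v,'k::comm_semiring_1) mpoly)"
proof -
  have "mhom mconst W P = (\<Sum>m\<in>Poly_Mapping.keys P. mconst (Poly_Mapping.lookup P m) *
     (\<Prod>v\<in>Poly_Mapping.keys m. W v ^ Poly_Mapping.lookup m v))"
    by (simp only: mhom_def)
  then have "ev b (mhom mconst W P) = (\<Sum>m\<in>Poly_Mapping.keys P. Poly_Mapping.lookup P m *
     (\<Prod>v\<in>Poly_Mapping.keys m. ev b (W v) ^ Poly_Mapping.lookup m v))"
    by (simp add: mhom_sum mhom_mult mhom_prod mhom_power)
  then show ?thesis
    by (simp only: ev_def'[of "\<lambda>S. ev b (W S)"] mon_def)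
qed

lemma mhom_cong:
  assumes "\<And>v. v \<in> mvars P \<Longrightarrow> \<sigma> v = \<sigma>' v"
  shows "ev \<sigma> P = ev \<sigma>' P"
  unfolding ev_def mhom_def
proof (intro sum.cong refl arg_cong2[where f="(*)"] prod.cong)
  fix m v assume "m \<in> Poly_Mapping.keys P" "v \<in> Poly_Mapping.keys m"
  then have "v \<in> mvars P" by (auto simp: mvars_def)
  then show "\<sigma> v ^ Poly_Mapping.lookup m v = \<sigma>' v ^ Poly_Mapping.lookup m v" by (simp add: assms)
qed



lemma alg_closed_infinite: "infinite (UNIV :: 'a::alg_closed_field set)"
proof
  assume fin: "finite (UNIV :: 'a set)"
  define q :: "'a poly" where "q = (\<Prod>a\<in>UNIV. [:-a, 1:])"
  have dq: "degree q = card (UNIV :: 'a set)"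
    unfolding q_def by (subst degree_prod_eq_sum_degree) (auto)
  have "card (UNIV :: 'a set) > 0" using fin by (simp add: card_gt_0_iff)
  then have "degree (q + 1) = degree q" using dq
    by (intro degree_add_eq_left) auto
  then have "degree (q + 1) > 0" using dq \<open>card (UNIV :: 'a set) > 0\<close> by simp
  then obtain x where "poly (q + 1) x = 0" using alg_closed_imp_poly_has_root by blast
  moreover have "poly q x = 0"
    unfolding q_def poly_prod using fin by (intro prod_zero) auto
  ultimately show False by simp
qed

lemma digit_bound:
  assumes "\<forall>i<k. a i < (D::nat)"
  shows "(\<Sum>i<k. a i * D ^ i) < D ^ k"
  using assms
proof (induction k)
  case 0 then show ?case by simp
next
  case (Suc k)
  have IH: "(\<Sum>i<k. a i * D ^ i) < D ^ k" using Suc.IH Suc.prems by simp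
  have ak: "a k + 1 \<le> D" using Suc.prems by auto
  have "(\<Sum>i<Suc k. a i * D ^ i) = (\<Sum>i<k. a i * D ^ i) + a k * D ^ k"
    by (rule sum.lessThan_Suc)
  also have "\<dots> < D ^ k + a k * D ^ k" using IH by linarith
  also have "\<dots> = (a k + 1) * D ^ k" by (simp only: distrib_right mult_1 add.commute)
  also have "\<dots> \<le> D * D ^ k" using ak by (rule mult_right_mono) simp
  also have "\<dots> = D ^ Suc k" by (rule power_Suc[symmetric])
  finally show ?case .
qed
lemma div_digit: "(A::nat) < P \<Longrightarrow> (A + x * P) div P = x"
  by (cases "P = 0") simp_all
lemma digits_unique:
  assumes "\<forall>i<k. a i < (D::nat)" "\<forall>i<k. c i < D"
    and "(\<Sum>i<k. a i * D ^ i) = (\<Sum>i<k. c i * D ^ i)"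
  shows "\<forall>i<k. a i = c i"
  using assms
proof (induction k)
  case 0 then show ?case by simp
next
  case (Suc k)
  let ?A = "\<Sum>i<k. a i * D ^ i" and ?C = "\<Sum>i<k. c i * D ^ i"
  have bA: "?A < D ^ k" using Suc.prems(1) by (intro digit_bound) simp
  have bC: "?C < D ^ k" using Suc.prems(2) by (intro digit_bound) simp
  have eq: "?A + a k * D ^ k = ?C + c k * D ^ k" using Suc.prems(3) by (simp only: sum.lessThan_Suc)
  have ak: "a k = c k" using div_digit[OF bA, of "a k"] div_digit[OF bC, of "c k"] eq by metis
  then have "?A = ?C" using eq by (metis add_right_cancel)
  moreover have "\<forall>i<k. a i < D" "\<forall>i<k. c i < D" using Suc.prems(1,2) by simp_all
  ultimately have "\<forall>i<k. a i = c i" using Suc.IH by blast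
  with ak show ?case using less_Suc_eq by auto
qed

lemma finite_mvars: "finite (mvars P)"
  by (simp add: mvars_def)

lemma mpoly_eq_zero_if_vanish:
  fixes Q :: "('v, 'k::field) mpoly"
  assumes inf: "infinite (UNIV :: 'k set)" and van: "\<And>b. ev b Q = 0"
  shows "Q = 0"
proof (rule ccontr)
  assume Qnz: "Q \<noteq> 0"
  define V where "V = mvars Q"
  have finV: "finite V" by (simp add: V_def finite_mvars)
  obtain h where hb: "bij_betw h V {0..<card V}" using ex_bij_betw_finite_nat[OF finV] by blast
  define g where "g = the_inv_into V h"
  have gh: "\<And>v. v \<in> V \<Longrightarrow> g (h v) = v"
    using hb unfolding g_def by (simp add: bij_betw_def the_inv_into_f_f)
  have hV: "\<And>v. v \<in> V \<Longrightarrow> h v < card V" using hb by (auto simp: bij_betw_def)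
  define D where "D = Suc (\<Sum>m\<in>Poly_Mapping.keys Q. \<Sum>v\<in>V. Poly_Mapping.lookup m v)"
  have keysV: "\<And>m. m \<in> Poly_Mapping.keys Q \<Longrightarrow> Poly_Mapping.keys m \<subseteq> V"
    by (auto simp: V_def mvars_def)
  have Dbig: "Poly_Mapping.lookup m v < D" if "m \<in> Poly_Mapping.keys Q" for m v
  proof (cases "v \<in> V")
    case True
    have "Poly_Mapping.lookup m v \<le> (\<Sum>v\<in>V. Poly_Mapping.lookup m v)"
      using True finV by (intro member_le_sum) auto
    also have "\<dots> \<le> (\<Sum>m\<in>Poly_Mapping.keys Q. \<Sum>v\<in>V. Poly_Mapping.lookup m v)"
      using that by (intro member_le_sum) auto
    finally show ?thesis by (simp add: D_def)
  next
    case False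
    then have "Poly_Mapping.lookup m v = 0" using keysV[OF that] by (auto simp: in_keys_iff)
    then show ?thesis by (simp add: D_def)
  qed
  define e where "e m = (\<Sum>v\<in>V. Poly_Mapping.lookup m v * D ^ h v)" for m
  have e_alt: "e m = (\<Sum>i<card V. Poly_Mapping.lookup m (g i) * D ^ i)" for m
  proof -
    have "e m = (\<Sum>v\<in>V. (\<lambda>i. Poly_Mapping.lookup m (g i) * D ^ i) (h v))"
      unfolding e_def by (intro sum.cong) (auto simp: gh)
    also have "\<dots> = (\<Sum>i\<in>{0..<card V}. Poly_Mapping.lookup m (g i) * D ^ i)"
      by (rule sum.reindex_bij_betw[OF hb])
    finally show ?thesis by (simp add: atLeast0LessThan)
  qed
  have einj: "m1 = m2" if "m1 \<in> Poly_Mapping.keys Q" "m2 \<in> Poly_Mapping.keys Q" "e m1 = e m2" for m1 m2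
  proof (rule poly_mapping_eqI)
    fix v
    have dig: "\<forall>i<card V. Poly_Mapping.lookup m1 (g i) = Poly_Mapping.lookup m2 (g i)"
      by (rule digits_unique[where D = D]) (use that Dbig e_alt in auto)
    show "Poly_Mapping.lookup m1 v = Poly_Mapping.lookup m2 v"
    proof (cases "v \<in> V")
      case True
      then show ?thesis using dig hV[OF True] gh[OF True] by metis
    next
      case False
      then have "v \<notin> Poly_Mapping.keys m1" "v \<notin> Poly_Mapping.keys m2"
        using keysV[OF that(1)] keysV[OF that(2)] by auto
      then show ?thesis by (simp add: in_keys_iff)
    qed
  qed
  define b where "b z v = z ^ (D ^ h v)" for z :: 'k and v
  have monb: "mon (b z) m = z ^ e m" if "m \<in> Poly_Mapping.keys Q" for z m
  proof -
    have "mon (b z) m = (\<Prod>v\<in>V. b z v ^ Poly_Mapping.lookup m v)"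
      by (rule mon_superset[OF finV keysV[OF that]])
    also have "\<dots> = (\<Prod>v\<in>V. z ^ (Poly_Mapping.lookup m v * D ^ h v))"
      by (simp add: b_def power_mult[symmetric] mult.commute)
    also have "\<dots> = z ^ e m" by (simp add: e_def power_sum)
    finally show ?thesis .
  qed
  define P' where "P' = (\<Sum>m\<in>Poly_Mapping.keys Q. monom (Poly_Mapping.lookup Q m) (e m))"
  have evb: "ev (b z) Q = poly P' z" for z
    by (simp add: ev_def' P'_def poly_sum poly_monom monb)
  obtain m0 where m0: "m0 \<in> Poly_Mapping.keys Q" using Qnz by (metis keys_eq_empty ex_in_conv)
  have "coeff P' (e m0) = (\<Sum>m\<in>Poly_Mapping.keys Q. if m = m0 then Poly_Mapping.lookup Q m else 0)"
    unfolding P'_def coeff_sum coeff_monom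
    by (intro sum.cong refl) (use einj m0 in auto)
  also have "\<dots> = Poly_Mapping.lookup Q m0" using m0 by simp
  finally have "coeff P' (e m0) \<noteq> 0" using m0 by (simp add: in_keys_iff)
  then have "P' \<noteq> 0" by auto
  then have "finite {z. poly P' z = 0}" by (rule poly_roots_finite)
  moreover have "{z. poly P' z = 0} = UNIV" using van evb by auto
  ultimately show False using inf by simp
qed



definition rhom :: "('a::comm_ring_1 \<Rightarrow> 'b::comm_ring_1) \<Rightarrow> bool" where
  "rhom \<phi> \<longleftrightarrow> \<phi> 0 = 0 \<and> \<phi> 1 = 1 \<and> (\<forall>x y. \<phi> (x + y) = \<phi> x + \<phi> y) \<and> (\<forall>x y. \<phi> (x * y) = \<phi> x * \<phi> y)"

lemma rhom_0: "rhom \<phi> \<Longrightarrow> \<phi> 0 = 0" and rhom_1: "rhom \<phi> \<Longrightarrow> \<phi> 1 = 1"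
  and rhom_add: "rhom \<phi> \<Longrightarrow> \<phi> (x + y) = \<phi> x + \<phi> y"
  and rhom_mult: "rhom \<phi> \<Longrightarrow> \<phi> (x * y) = \<phi> x * \<phi> y"
  by (auto simp: rhom_def)

lemma rhom_uminus: "rhom \<phi> \<Longrightarrow> \<phi> (- x) = - \<phi> x"
  using rhom_add[of \<phi> "-x" x] rhom_0[of \<phi>] by (simp add: eq_neg_iff_add_eq_0)

lemma rhom_diff: "rhom \<phi> \<Longrightarrow> \<phi> (x - y) = \<phi> x - \<phi> y"
  using rhom_add[of \<phi> x "-y"] rhom_uminus[of \<phi> y] by simp

lemma rhom_sum: "rhom \<phi> \<Longrightarrow> \<phi> (\<Sum>j\<in>J. f j) = (\<Sum>j\<in>J. \<phi> (f j))"
  by (induction J rule: infinite_finite_induct) (auto simp: rhom_0 rhom_add)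

lemma rhom_prod: "rhom \<phi> \<Longrightarrow> \<phi> (\<Prod>j\<in>J. f j) = (\<Prod>j\<in>J. \<phi> (f j))"
  by (induction J rule: infinite_finite_induct) (auto simp: rhom_1 rhom_mult)

lemma rhom_prod_list: "rhom \<phi> \<Longrightarrow> \<phi> (prod_list (map f xs)) = prod_list (map (\<lambda>j. \<phi> (f j)) xs)"
  by (induction xs) (auto simp: rhom_1 rhom_mult)

lemma rhom_ev: "rhom (ev b :: ('v,'k::comm_ring_1) mpoly \<Rightarrow> 'k)"
  by (simp add: rhom_def mhom_add mhom_mult)

lemma rhom_to_ac: "rhom (to_ac :: 'a::field \<Rightarrow> 'a alg_closure)"
  by (simp add: rhom_def)

lemma rhom_id: "rhom id"
  by (simp add: rhom_def)

lemma rhom_comp: "rhom \<phi> \<Longrightarrow> rhom \<psi> \<Longrightarrow> rhom (\<phi> \<circ> \<psi>)"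
  by (simp add: rhom_def)

section \<open>Homomorphisms commute with the Boolean-ring operations\<close>

lemma hom_bconst: "rhom \<phi> \<Longrightarrow> \<phi> \<circ> bconst c = bconst (\<phi> c)"
  by (auto simp: bconst_def rhom_0 fun_eq_iff)

lemma hom_bvar: "rhom \<phi> \<Longrightarrow> \<phi> \<circ> bvar e = bvar e"
  by (auto simp: bvar_def rhom_0 rhom_1 fun_eq_iff)

lemma hom_badd: "rhom \<phi> \<Longrightarrow> \<phi> \<circ> badd u v = badd (\<phi> \<circ> u) (\<phi> \<circ> v)"
  by (auto simp: badd_def rhom_add fun_eq_iff)

lemma hom_bsub: "rhom \<phi> \<Longrightarrow> \<phi> \<circ> bsub u v = bsub (\<phi> \<circ> u) (\<phi> \<circ> v)"
  by (auto simp: bsub_def rhom_diff fun_eq_iff)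

lemma hom_bmul: "rhom \<phi> \<Longrightarrow> \<phi> \<circ> bmul n u v = bmul n (\<phi> \<circ> u) (\<phi> \<circ> v)"
  unfolding bmul_def fun_eq_iff comp_def
  by (auto simp: rhom_sum rhom_mult rhom_0 intro!: sum.cong)

lemma hom_bprod: "rhom \<phi> \<Longrightarrow> \<phi> \<circ> bprod n F xs = bprod n (\<lambda>j. \<phi> \<circ> F j) xs"
  by (induction xs) (simp_all add: bprod_def hom_bconst rhom_1 hom_bmul)

lemma hom_indic: "rhom \<phi> \<Longrightarrow> \<phi> \<circ> indic n iota s j = indic n (\<phi> \<circ> iota) s j"
  by (simp add: indic_def hom_bprod hom_bsub hom_bconst hom_bvar rhom_1)

lemma hom_fpoly: "rhom \<phi> \<Longrightarrow> \<phi> \<circ> fpoly n r iota s t i = fpoly n r (\<phi> \<circ> iota) s t i"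
proof -
  assume h: "rhom \<phi>"
  show ?thesis
    unfolding fpoly_def fun_eq_iff comp_def
    using hom_indic[OF h, of n iota s] by (auto simp: rhom_sum[OF h] rhom_mult[OF h] fun_eq_iff comp_def)
qed

lemma hom_ppoly: "rhom \<phi> \<Longrightarrow> \<phi> \<circ> ppoly n r iota s = ppoly n r (\<phi> \<circ> iota) s"
  by (simp add: ppoly_def hom_bprod hom_bsub hom_bconst hom_indic rhom_1)

lemma hom_beval: "rhom \<phi> \<Longrightarrow> \<phi> (beval n h x) = beval n (\<phi> \<circ> h) (\<phi> \<circ> x)"
  by (simp add: beval_def rhom_sum rhom_mult rhom_prod)



definition idem_pt :: "nat \<Rightarrow> (nat \<Rightarrow> 'a::comm_ring_1) \<Rightarrow> bool" where
  "idem_pt n x \<longleftrightarrow> (\<forall>l\<in>{1..n}. x l * x l = x l)"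

lemma prod_idem:
  assumes "finite C" "\<forall>l\<in>C. x l * x l = (x l :: 'a::comm_ring_1)"
  shows "prod x C * prod x C = prod x C"
  using assms by (simp add: prod.distrib[symmetric])

lemma prod_union_idem:
  assumes "finite A" "finite B" "\<forall>l\<in>A \<union> B. x l * x l = (x l :: 'a::comm_ring_1)"
  shows "prod x (A \<union> B) = prod x A * prod x B"
proof -
  have "prod x A * prod x B = prod x (A \<union> B) * prod x (A \<inter> B)"
    using assms by (simp add: prod.union_inter)
  also have "prod x (A \<union> B) = prod x ((A \<union> B) - (A \<inter> B)) * prod x (A \<inter> B)"
    using assms by (subst prod.subset_diff[of "A \<inter> B" "A \<union> B"]) auto
  also have "\<dots> * prod x (A \<inter> B) = prod x ((A \<union> B) - (A \<inter> B)) * (prod x (A \<inter> B) * prod x (A \<inter> B))"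
    by (simp add: mult.assoc)
  also have "prod x (A \<inter> B) * prod x (A \<inter> B) = prod x (A \<inter> B)"
    using assms by (intro prod_idem) auto
  also have "prod x ((A \<union> B) - (A \<inter> B)) * prod x (A \<inter> B) = prod x (A \<union> B)"
    using assms by (subst prod.subset_diff[of "A \<inter> B" "A \<union> B"]) auto
  finally show ?thesis ..
qed

lemma beval_bconst [simp]: "beval n (bconst c) x = c"
proof -
  have "beval n (bconst c) x = (\<Sum>S\<in>Pow {1..n}. if S = {} then c * (\<Prod>l\<in>S. x l) else 0)"
    unfolding beval_def bconst_def by (intro sum.cong) auto
  also have "\<dots> = c" by (subst sum.delta) auto
  finally show ?thesis .
qed

lemma beval_bvar: "e \<in> {1..n} \<Longrightarrow> beval n (bvar e) x = x e"
proof -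
  assume e: "e \<in> {1..n}"
  have "beval n (bvar e) x = (\<Sum>S\<in>Pow {1..n}. if S = {e} then (\<Prod>l\<in>S. x l) else 0)"
    unfolding beval_def bvar_def by (intro sum.cong) auto
  also have "\<dots> = x e" using e by (subst sum.delta) auto
  finally show ?thesis .
qed

lemma beval_badd: "beval n (badd u v) x = beval n u x + beval n v x"
  by (simp add: beval_def badd_def distrib_right sum.distrib)

lemma beval_bsub: "beval n (bsub u v) x = beval n u x - beval n v x"
  by (simp add: beval_def bsub_def left_diff_distrib sum_subtractf)

lemma sum_swap3: "(\<Sum>S\<in>P. \<Sum>A\<in>Q. \<Sum>B\<in>R. g S A B) = (\<Sum>A\<in>Q. \<Sum>B\<in>R. \<Sum>S\<in>P. g S A B)"
proof -
  have "(\<Sum>S\<in>P. \<Sum>A\<in>Q. \<Sum>B\<in>R. g S A B) = (\<Sum>A\<in>Q. \<Sum>S\<in>P. \<Sum>B\<in>R. g S A B)"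
    by (rule sum.swap)
  also have "\<dots> = (\<Sum>A\<in>Q. \<Sum>B\<in>R. \<Sum>S\<in>P. g S A B)"
    by (intro sum.cong refl) (rule sum.swap)
  finally show ?thesis .
qed

lemma beval_bmul:
  assumes "idem_pt n x"
  shows "beval n (bmul n u v) x = beval n u x * beval n v x"
proof -
  let ?P = "Pow {1..n}"
  have "beval n (bmul n u v) x = (\<Sum>S\<in>?P. \<Sum>A\<in>?P. \<Sum>B\<in>?P. if A \<union> B = S then u A * v B * (\<Prod>l\<in>S. x l) else 0)"
    unfolding beval_def bmul_def sum_distrib_right by (intro sum.cong) auto
  also have "\<dots> = (\<Sum>A\<in>?P. \<Sum>B\<in>?P. \<Sum>S\<in>?P. if A \<union> B = S then u A * v B * (\<Prod>l\<in>S. x l) else 0)"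
    by (rule sum_swap3)
  also have "\<dots> = (\<Sum>A\<in>?P. \<Sum>B\<in>?P. u A * v B * (\<Prod>l\<in>A \<union> B. x l))"
    by (intro sum.cong refl) (auto simp: sum.delta')
  also have "\<dots> = (\<Sum>A\<in>?P. \<Sum>B\<in>?P. (u A * (\<Prod>l\<in>A. x l)) * (v B * (\<Prod>l\<in>B. x l)))"
  proof (intro sum.cong refl)
    fix A B assume "A \<in> ?P" "B \<in> ?P"
    then have "(\<Prod>l\<in>A \<union> B. x l) = (\<Prod>l\<in>A. x l) * (\<Prod>l\<in>B. x l)"
      using assms unfolding idem_pt_def by (intro prod_union_idem) (auto intro: finite_subset)
    then show "u A * v B * (\<Prod>l\<in>A \<union> B. x l) = (u A * (\<Prod>l\<in>A. x l)) * (v B * (\<Prod>l\<in>B. x l))"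
      by (simp add: mult_ac)
  qed
  also have "\<dots> = beval n u x * beval n v x"
    by (simp add: beval_def sum_distrib_left sum_distrib_right) (rule sum.swap)
  finally show ?thesis .
qed

lemma beval_bprod:
  assumes "idem_pt n x"
  shows "beval n (bprod n F xs) x = prod_list (map (\<lambda>j. beval n (F j) x) xs)"
  by (induction xs) (simp_all add: bprod_def beval_bmul[OF assms])

lemma beval_lin:
  "beval n (\<lambda>S. \<Sum>j\<in>J. c j * h j S) x = (\<Sum>j\<in>J. c j * beval n (h j) x)"
  unfolding beval_def sum_distrib_right sum_distrib_left
  by (subst sum.swap) (simp add: mult.assoc)

lemma beval_cong:
  assumes "\<And>S. S \<subseteq> {1..n} \<Longrightarrow> h S = h' S" "\<And>l. l \<in> {1..n} \<Longrightarrow> x l = x' l"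
  shows "beval n h x = beval n h' x'"
  unfolding beval_def
  by (intro sum.cong refl arg_cong2[where f = "(*)"] prod.cong) (auto simp: assms subset_iff)

lemma bmul_cong:
  assumes "\<And>S. S \<subseteq> {1..n} \<Longrightarrow> u S = u' S"
  shows "bmul n u v = bmul n u' v"
  unfolding bmul_def fun_eq_iff by (auto intro!: sum.cong simp: assms)

lemma bit_factor: "(1::bit) - (a - b) = (if a = b then 1 else 0)"
  by (cases "a = 0"; cases "b = 0") auto

lemma prod_list_ind: "prod_list (map (\<lambda>e. if P e then (1::'a::comm_ring_1) else 0) xs) = (if \<forall>e\<in>set xs. P e then 1 else 0)"
  by (induction xs) auto

lemma idem_iota: "rhom (iota :: bit \<Rightarrow> 'a::comm_ring_1) \<Longrightarrow> idem_pt n (iota \<circ> s')"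
proof -
  assume h: "rhom iota"
  have "\<And>a::bit. a * a = a" by (case_tac "a = 0") auto
  then show ?thesis unfolding idem_pt_def using rhom_mult[OF h] by (metis comp_apply)
qed

lemma beval_indic:
  assumes h: "rhom (iota :: bit \<Rightarrow> 'a::comm_ring_1)"
  shows "beval n (indic n iota s j) (iota \<circ> s') = iota (if \<forall>e\<in>{1..n}. s' e = s j e then 1 else 0)"
proof -
  have "beval n (indic n iota s j) (iota \<circ> s') =
        prod_list (map (\<lambda>e. iota (1 - (s' e - s j e))) [1..<n+1])"
    unfolding indic_def beval_bprod[OF idem_iota[OF h]]
  proof (intro arg_cong[where f = prod_list] map_cong refl)
    fix e assume "e \<in> set [1..<n+1]"
    then have e: "e \<in> {1..n}" by auto
    have "beval n (bsub (bconst 1) (bsub (bvar e) (bconst (iota (s j e))))) (iota \<circ> s')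
        = 1 - (iota (s' e) - iota (s j e))"
      by (simp add: beval_bsub beval_bvar[OF e])
    also have "\<dots> = iota (1 - (s' e - s j e))"
      by (simp only: rhom_diff[OF h] rhom_1[OF h])
    finally show "beval n (bsub (bconst 1) (bsub (bvar e) (bconst (iota (s j e))))) (iota \<circ> s')
        = iota (1 - (s' e - s j e))" .
  qed
  also have "\<dots> = iota (prod_list (map (\<lambda>e. 1 - (s' e - s j e)) [1..<n+1]))"
    by (simp add: rhom_prod_list[OF h])
  also have "prod_list (map (\<lambda>e. 1 - (s' e - s j e)) [1..<n+1]) = (if \<forall>e\<in>{1..n}. s' e = s j e then 1 else 0)"
    unfolding bit_factor prod_list_ind by auto
  finally show ?thesis .
qed

lemma beval_fpoly:
  assumes h: "rhom (iota :: bit \<Rightarrow> 'a::comm_ring_1)"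
  shows "beval n (fpoly n r iota s t i) (iota \<circ> s') =
     iota (\<Sum>j\<in>{1..r}. t j i * (if \<forall>e\<in>{1..n}. s' e = s j e then 1 else 0))"
proof -
  have "beval n (fpoly n r iota s t i) (iota \<circ> s') = (\<Sum>j\<in>{1..r}. iota (t j i) * beval n (indic n iota s j) (iota \<circ> s'))"
    unfolding fpoly_def by (rule beval_lin)
  also have "\<dots> = (\<Sum>j\<in>{1..r}. iota (t j i) * iota (if \<forall>e\<in>{1..n}. s' e = s j e then 1 else 0))"
    by (simp only: beval_indic[OF h])
  also have "\<dots> = iota (\<Sum>j\<in>{1..r}. t j i * (if \<forall>e\<in>{1..n}. s' e = s j e then 1 else 0))"
    by (simp only: rhom_sum[OF h] rhom_mult[OF h])
  finally show ?thesis .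
qed
lemma beval_ppoly:
  assumes h: "rhom (iota :: bit \<Rightarrow> 'a::comm_ring_1)"
  shows "beval n (ppoly n r iota s) (iota \<circ> s') =
     iota (prod_list (map (\<lambda>j. 1 - (if \<forall>e\<in>{1..n}. s' e = s j e then 1 else 0)) [1..<r+1]))"
proof -
  have "beval n (ppoly n r iota s) (iota \<circ> s') =
     prod_list (map (\<lambda>j. beval n (bsub (bconst 1) (indic n iota s j)) (iota \<circ> s')) [1..<r+1])"
    unfolding ppoly_def by (rule beval_bprod[OF idem_iota[OF h]])
  also have "\<dots> = prod_list (map (\<lambda>j. iota (1 - (if \<forall>e\<in>{1..n}. s' e = s j e then 1 else 0))) [1..<r+1])"
    by (simp only: beval_bsub beval_bconst beval_indic[OF h] rhom_diff[OF h] rhom_1[OF h])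
  also have "\<dots> = iota (prod_list (map (\<lambda>j. 1 - (if \<forall>e\<in>{1..n}. s' e = s j e then 1 else 0)) [1..<r+1]))"
    by (rule rhom_prod_list[OF h, symmetric])
  finally show ?thesis .
qed

lemma data_sum:
  assumes k: "k \<in> {1..r}" and m: "\<forall>e\<in>{1..n}. s' e = s k e"
    and dist: "\<And>j k. j \<in> {1..r} \<Longrightarrow> k \<in> {1..r} \<Longrightarrow> (\<forall>e\<in>{1..n}. s j e = s k e) \<Longrightarrow> j = k"
  shows "(\<Sum>j\<in>{1..r}. t j i * (if \<forall>e\<in>{1..n}. s' e = s j e then 1 else (0::bit))) = t k i"
    and "prod_list (map (\<lambda>j. 1 - (if \<forall>e\<in>{1..n}. s' e = s j e then 1 else (0::bit))) [1..<r+1]) = 0"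
proof -
  have iff: "(\<forall>e\<in>{1..n}. s' e = s j e) \<longleftrightarrow> j = k" if "j \<in> {1..r}" for j
  proof
    assume A: "\<forall>e\<in>{1..n}. s' e = s j e"
    have "\<forall>e\<in>{1..n}. s j e = s k e" using A m by simp
    then show "j = k" by (rule dist[OF that k])
  next
    assume "j = k" then show "\<forall>e\<in>{1..n}. s' e = s j e" using m by simp
  qed
  have "(\<Sum>j\<in>{1..r}. t j i * (if \<forall>e\<in>{1..n}. s' e = s j e then 1 else (0::bit))) =
        (\<Sum>j\<in>{1..r}. if j = k then t j i else 0)"
    by (intro sum.cong refl) (simp add: iff)
  also have "\<dots> = t k i" using k by simp
  finally show "(\<Sum>j\<in>{1..r}. t j i * (if \<forall>e\<in>{1..n}. s' e = s j e then 1 else (0::bit))) = t k i" .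
  have kk: "k \<in> set [1..<r+1]" using k by auto
  have "(\<lambda>j. 1 - (if \<forall>e\<in>{1..n}. s' e = s j e then 1 else (0::bit))) k = 0" using m by simp
  have "0 \<in> set (map (\<lambda>j. 1 - (if \<forall>e\<in>{1..n}. s' e = s j e then 1 else (0::bit))) [1..<r+1])"
    unfolding list.set_map by (rule image_eqI[OF _ kk]) (simp add: m)
  then show "prod_list (map (\<lambda>j. 1 - (if \<forall>e\<in>{1..n}. s' e = s j e then 1 else (0::bit))) [1..<r+1]) = 0"
    by (simp only: prod_list_zero_iff)
qed

lemma prod_list_ones: "prod_list (map (\<lambda>j. 1::'a::comm_monoid_mult) xs) = 1"
  by (induction xs) simp_all

lemma nondata:
  assumes "\<not> (\<exists>k\<in>{1..r}. \<forall>e\<in>{1..n}. s' e = s k e)"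
  shows "(\<Sum>j\<in>{1..r}. t j i * (if \<forall>e\<in>{1..n}. s' e = s j e then 1 else (0::bit))) = 0"
    and "prod_list (map (\<lambda>j. 1 - (if \<forall>e\<in>{1..n}. s' e = s j e then 1 else (0::bit))) [1..<r+1]) = 1"
proof -
  show "(\<Sum>j\<in>{1..r}. t j i * (if \<forall>e\<in>{1..n}. s' e = s j e then 1 else (0::bit))) = 0"
    using assms by (intro sum.neutral) auto
  have "map (\<lambda>j. 1 - (if \<forall>e\<in>{1..n}. s' e = s j e then 1 else (0::bit))) [1..<r+1] = map (\<lambda>j. 1) [1..<r+1]"
    using assms by (intro map_cong refl) auto
  then show "prod_list (map (\<lambda>j. 1 - (if \<forall>e\<in>{1..n}. s' e = s j e then 1 else (0::bit))) [1..<r+1]) = 1"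
    by (simp only: prod_list_ones)
qed



lemma mvars_add: "mvars (p + q) \<subseteq> mvars p \<union> mvars q"
  using keys_add[of p q] by (auto simp: mvars_def)

lemma mvars_diff: "mvars (p - q) \<subseteq> mvars p \<union> mvars (q :: ('v,'k::ab_group_add) mpoly)"
  using keys_diff[of p q] by (auto simp: mvars_def)

lemma mvars_mult: "mvars (p * q) \<subseteq> mvars p \<union> mvars (q :: ('v,'k::comm_semiring_1) mpoly)"
proof
  fix v assume "v \<in> mvars (p * q)"
  then obtain m where m: "m \<in> Poly_Mapping.keys (p * q)" "v \<in> Poly_Mapping.keys m" by (auto simp: mvars_def)
  then obtain a b where "m = a + b" "a \<in> Poly_Mapping.keys p" "b \<in> Poly_Mapping.keys q"
    using keys_mult[of p q] by blast
  then show "v \<in> mvars p \<union> mvars q" using m(2) by (auto simp: mvars_def keys_add_nat)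
qed

lemma mvars_mconst: "mvars (mconst c :: ('v,'k::zero) mpoly) = {}"
  by (simp add: mvars_def mconst_def)

lemma mvars_mvar: "mvars (mvar v :: ('v,'k::comm_semiring_1) mpoly) \<subseteq> {v}"
  by (simp add: mvars_def mvar_def)

lemma mvars_sum: "mvars (\<Sum>j\<in>J. f j) \<subseteq> (\<Union>j\<in>J. mvars (f j :: ('v,'k::comm_monoid_add) mpoly))"
  using keys_sum[of f J] unfolding mvars_def by blast

lemma moebius:
  fixes h :: "nat set \<Rightarrow> 'a::comm_ring_1"
  assumes van: "\<And>x. beval n h x = 0"
  shows "S \<subseteq> {1..n} \<Longrightarrow> h S = 0"
proof (induction "card S" arbitrary: S rule: less_induct)
  case less
  have finS: "finite S" using less.prems finite_subset by blast
  define x where "x l = (if l \<in> S then 1 else (0::'a))" for l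
  have px: "(\<Prod>l\<in>T. x l) = (if T \<subseteq> S then 1 else 0)" if "finite T" for T
  proof (cases "T \<subseteq> S")
    case True then show ?thesis by (auto simp: x_def intro!: prod.neutral)
  next
    case False
    then obtain l where "l \<in> T" "l \<notin> S" by auto
    then show ?thesis using False that by (auto simp: x_def intro!: prod_zero bexI[of _ l])
  qed
  have "0 = beval n h x" using van by simp
  also have "\<dots> = (\<Sum>T\<in>Pow {1..n}. if T \<subseteq> S then h T else 0)"
    unfolding beval_def by (intro sum.cong refl) (auto simp: px finite_subset)
  also have "\<dots> = (\<Sum>T\<in>Pow S. h T)"
    using less.prems by (intro sum.mono_neutral_cong_right) auto
  also have "\<dots> = h S + (\<Sum>T\<in>Pow S - {S}. h T)"
    using finS by (subst sum.remove[of _ S]) auto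
  also have "(\<Sum>T\<in>Pow S - {S}. h T) = 0"
  proof (intro sum.neutral ballI)
    fix T assume "T \<in> Pow S - {S}"
    then have "T \<subset> S" by auto
    then have "card T < card S" using finS by (simp add: psubset_card_mono)
    then show "h T = 0" using less.hyps \<open>T \<subset> S\<close> less.prems by auto
  qed
  finally show ?case by simp
qed


lemma ev_comp_mconst_to_ac: "ev b \<circ> (mconst \<circ> to_ac) = to_ac"
  by (simp add: fun_eq_iff)

lemma Wval:
  "(\<lambda>S. ev b (Wpoly n r s t i S)) = badd (fpoly n r to_ac s t i) (bmul n b (ppoly n r to_ac s))"
proof -
  have "(\<lambda>S. ev b (Wpoly n r s t i S)) = ev b \<circ> Wpoly n r s t i" by (simp add: comp_def)
  also have "\<dots> = badd (fpoly n r to_ac s t i) (bmul n (ev b \<circ> gpoly n) (ppoly n r to_ac s))"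
    unfolding Wpoly_def
    by (simp only: hom_badd[OF rhom_ev] hom_bmul[OF rhom_ev] hom_fpoly[OF rhom_ev] hom_ppoly[OF rhom_ev] ev_comp_mconst_to_ac)
  also have "bmul n (ev b \<circ> gpoly n) (ppoly n r to_ac s) = bmul n b (ppoly n r to_ac s)"
    by (rule bmul_cong) (simp add: gpoly_def)
  finally show ?thesis .
qed

lemma ker_iff:
  "P \<in> kerPhi n r s t i \<longleftrightarrow> P \<in> cring_carrier n \<and> (\<forall>b. ev (\<lambda>S. ev b (Wpoly n r s t i S)) P = 0)"
proof -
  have "mhom mconst (Wpoly n r s t i) P = 0 \<longleftrightarrow> (\<forall>b. ev b (mhom mconst (Wpoly n r s t i) P) = 0)"
    using mpoly_eq_zero_if_vanish[OF alg_closed_infinite] by auto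
  then show ?thesis
    unfolding kerPhi_def Phi_def by (simp add: mhom_comp)
qed

theorem mainTheorem1:
  fixes n r i :: nat and s t :: "nat \<Rightarrow> nat \<Rightarrow> bit"
  assumes "n \<ge> 1" and "r \<ge> 1" and "i \<in> {1..n}"
    and distinct_inputs: "\<And>j k. j \<in> {1..r} \<Longrightarrow> k \<in> {1..r} \<Longrightarrow> (\<forall>e\<in>{1..n}. s j e = s k e) \<Longrightarrow> j = k"
  shows "kerPhi n r s t i =
           {P \<in> cring_carrier n. \<forall>b :: nat set \<Rightarrow> F2bar.
              mhom id (\<lambda>S. mhom id b (Wpoly n r s t i S)) P = 0}
    \<and> (\<forall>c :: nat set \<Rightarrow> F2bar. (\<forall>S. S \<subseteq> {1..n} \<longrightarrow> c S \<in> range to_ac) \<longrightarrow>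
           ((\<forall>P\<in>kerPhi n r s t i. mhom id c P = 0)
              \<longleftrightarrow> (\<forall>j\<in>{1..r}. beval n (\<lambda>S. of_ac (c S)) (s j) = t j i))
         \<and> ((\<forall>P\<in>kerPhi n r s t i. mhom id c P = 0)
              \<longleftrightarrow> (\<exists>q :: nat set \<Rightarrow> bit. \<forall>S. S \<subseteq> {1..n} \<longrightarrow>
                     of_ac (c S) = badd (fpoly n r id s t i) (bmul n q (ppoly n r id s)) S)))"
proof -
  let ?W = "Wpoly n r s t i"
  let ?K = "kerPhi n r s t i"
  have part1: "?K = {P \<in> cring_carrier n. \<forall>b :: nat set \<Rightarrow> F2bar. ev (\<lambda>S. ev b (?W S)) P = 0}"
    using ker_iff by blast
  have part2: "((\<forall>P\<in>?K. ev c P = 0) \<longleftrightarrow> (\<forall>j\<in>{1..r}. beval n (\<lambda>S. of_ac (c S)) (s j) = t j i))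
         \<and> ((\<forall>P\<in>?K. ev c P = 0) \<longleftrightarrow> (\<exists>q :: nat set \<Rightarrow> bit. \<forall>S. S \<subseteq> {1..n} \<longrightarrow>
                     of_ac (c S) = badd (fpoly n r id s t i) (bmul n q (ppoly n r id s)) S))"
    if crange: "\<forall>S. S \<subseteq> {1..n} \<longrightarrow> c S \<in> range to_ac" for c :: "nat set \<Rightarrow> F2bar"
  proof -
    define c' where "c' = (\<lambda>S. of_ac (c S))"
    have cc: "c S = to_ac (c' S)" if "S \<subseteq> {1..n}" for S
      using crange that by (simp add: c'_def to_ac_of_ac)
    have AB: "\<forall>j\<in>{1..r}. beval n c' (s j) = t j i" if A: "\<forall>P\<in>?K. ev c P = 0"
    proof
      fix j assume j: "j \<in> {1..r}"
      define L :: "(nat set, F2bar) mpoly" where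
        "L = (\<Sum>S\<in>Pow {1..n}. mconst (\<Prod>l\<in>S. to_ac (s j l)) * mvar S) - mconst (to_ac (t j i))"
      have evL: "ev \<sigma> L = beval n \<sigma> (to_ac \<circ> s j) - to_ac (t j i)" for \<sigma>
        by (simp add: L_def mhom_diff mhom_sum mhom_mult beval_def mult.commute)
      have "mvars L \<subseteq> Pow {1..n}"
      proof -
        have sumv: "mvars (\<Sum>S\<in>Pow {1..n}. mconst (\<Prod>l\<in>S. to_ac (s j l)) * mvar S :: (nat set, F2bar) mpoly) \<subseteq> Pow {1..n}"
        proof (rule order_trans[OF mvars_sum], intro UN_least)
          fix S assume "S \<in> Pow {1..n}"
          have "mvars (mconst (\<Prod>l\<in>S. to_ac (s j l)) * mvar S :: (nat set, F2bar) mpoly) \<subseteq> {S}"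
            by (rule order_trans[OF mvars_mult]) (simp add: mvars_mconst mvars_mvar)
          then show "mvars (mconst (\<Prod>l\<in>S. to_ac (s j l)) * mvar S :: (nat set, F2bar) mpoly) \<subseteq> Pow {1..n}"
            by (rule order_trans) (use \<open>S \<in> Pow {1..n}\<close> in simp)
        qed
        show ?thesis unfolding L_def
          by (rule order_trans[OF mvars_diff]) (use sumv in \<open>simp add: mvars_mconst\<close>)
      qed
      then have Lc: "L \<in> cring_carrier n" by (simp add: cring_carrier_def)
      have mj: "\<forall>e\<in>{1..n}. s j e = s j e" by simp
      have "ev (\<lambda>S. ev b (?W S)) L = 0" for b
      proof -
        have "ev (\<lambda>S. ev b (?W S)) L = beval n (badd (fpoly n r to_ac s t i) (bmul n b (ppoly n r to_ac s))) (to_ac \<circ> s j) - to_ac (t j i)"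
          by (simp only: evL Wval)
        also have "\<dots> = 0"
        proof -
          note d1 = data_sum(1)[where s'="s j" and s=s and n=n and t=t and i=i, OF j mj distinct_inputs]
          note d2 = data_sum(2)[where s'="s j" and s=s and n=n, OF j mj distinct_inputs]
          have "beval n (badd (fpoly n r to_ac s t i) (bmul n b (ppoly n r to_ac s))) (to_ac \<circ> s j)
             = beval n (fpoly n r to_ac s t i) (to_ac \<circ> s j) + beval n b (to_ac \<circ> s j) * beval n (ppoly n r to_ac s) (to_ac \<circ> s j)"
            by (simp only: beval_badd beval_bmul[OF idem_iota[OF rhom_to_ac]])
          also have "\<dots> = to_ac (t j i) + beval n b (to_ac \<circ> s j) * to_ac 0"
            by (simp only: beval_fpoly[OF rhom_to_ac] beval_ppoly[OF rhom_to_ac] d1 d2)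
          finally show ?thesis by simp
        qed
        finally show ?thesis .
      qed
      with Lc have "L \<in> ?K" using ker_iff by blast
      with A have "ev c L = 0" by blast
      then have "beval n c (to_ac \<circ> s j) = to_ac (t j i)" by (simp add: evL)
      moreover have "beval n c (to_ac \<circ> s j) = beval n (to_ac \<circ> c') (to_ac \<circ> s j)"
        by (rule beval_cong) (simp_all add: cc)
      moreover have "\<dots> = to_ac (beval n c' (s j))"
        by (rule hom_beval[OF rhom_to_ac, symmetric])
      ultimately show "beval n c' (s j) = t j i" by simp
    qed
    have BC: "\<forall>S. S \<subseteq> {1..n} \<longrightarrow> c' S = badd (fpoly n r id s t i) (bmul n c' (ppoly n r id s)) S"
      if B: "\<forall>j\<in>{1..r}. beval n c' (s j) = t j i"
    proof (intro allI impI)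
      fix S :: "nat set" assume S: "S \<subseteq> {1..n}"
      let ?h = "bsub c' (badd (fpoly n r id s t i) (bmul n c' (ppoly n r id s)))"
      have "beval n ?h x = 0" for x :: "nat \<Rightarrow> bit"
      proof -
        have fx: "beval n (fpoly n r id s t i) x = (\<Sum>j\<in>{1..r}. t j i * (if \<forall>e\<in>{1..n}. x e = s j e then 1 else 0))"
          using beval_fpoly[OF rhom_id, of n r s t i x] by simp
        have px: "beval n (ppoly n r id s) x = prod_list (map (\<lambda>j. 1 - (if \<forall>e\<in>{1..n}. x e = s j e then 1 else (0::bit))) [1..<r+1])"
          using beval_ppoly[OF rhom_id, of n r s x] by simp
        have idx: "idem_pt n x" using idem_iota[OF rhom_id, of n x] by simp
        have hx: "beval n ?h x = beval n c' x - (beval n (fpoly n r id s t i) x + beval n c' x * beval n (ppoly n r id s) x)"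
          by (simp add: beval_bsub beval_badd beval_bmul[OF idx])
        show ?thesis
        proof (cases "\<exists>k\<in>{1..r}. \<forall>e\<in>{1..n}. x e = s k e")
          case True
          then obtain k where k: "k \<in> {1..r}" and m: "\<forall>e\<in>{1..n}. x e = s k e" by blast
          have "beval n c' x = beval n c' (s k)" by (rule beval_cong) (simp_all add: m)
          also have "\<dots> = t k i" using B k by blast
          finally have cv: "beval n c' x = t k i" .
          have e1: "beval n (fpoly n r id s t i) x = t k i"
            using fx data_sum(1)[where s'=x and s=s and n=n and t=t and i=i, OF k m distinct_inputs] by (rule trans)
          have e2: "beval n (ppoly n r id s) x = 0"
            using px data_sum(2)[where s'=x and s=s and n=n, OF k m distinct_inputs] by (rule trans)
          show ?thesis unfolding hx e1 e2 cv by simp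
        next
          case False
          show ?thesis using hx fx px nondata(1)[OF False, where t=t and i=i] nondata(2)[OF False]
            by (simp only: diff_self add_0_left mult_1_right)
        qed
      qed
      then have "?h S = 0" using moebius S by blast
      then show "c' S = badd (fpoly n r id s t i) (bmul n c' (ppoly n r id s)) S"
        unfolding bsub_def by (simp only: right_minus_eq)
    qed
    have CA: "\<forall>P\<in>?K. ev c P = 0"
      if C: "\<exists>q :: nat set \<Rightarrow> bit. \<forall>S. S \<subseteq> {1..n} \<longrightarrow> c' S = badd (fpoly n r id s t i) (bmul n q (ppoly n r id s)) S"
    proof
      fix P assume P: "P \<in> ?K"
      from C obtain q where q: "\<And>S. S \<subseteq> {1..n} \<Longrightarrow> c' S = badd (fpoly n r id s t i) (bmul n q (ppoly n r id s)) S" by blast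
      have wb: "(\<lambda>S. ev (to_ac \<circ> q) (?W S)) = to_ac \<circ> badd (fpoly n r id s t i) (bmul n q (ppoly n r id s))"
        unfolding Wval
        by (simp only: hom_badd[OF rhom_to_ac] hom_bmul[OF rhom_to_ac] hom_fpoly[OF rhom_to_ac] hom_ppoly[OF rhom_to_ac] comp_id)
      have "mvars P \<subseteq> Pow {1..n}" using P by (simp add: kerPhi_def cring_carrier_def)
      then have "ev c P = ev (\<lambda>S. ev (to_ac \<circ> q) (?W S)) P"
      proof (intro mhom_cong)
        fix v assume "v \<in> mvars P"
        then have v: "v \<subseteq> {1..n}" using \<open>mvars P \<subseteq> Pow {1..n}\<close> by blast
        have "ev (to_ac \<circ> q) (?W v) = to_ac (badd (fpoly n r id s t i) (bmul n q (ppoly n r id s)) v)"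
          using fun_cong[OF wb, of v] by (simp only: comp_apply)
        also have "\<dots> = to_ac (c' v)" by (simp only: q[OF v])
        also have "\<dots> = c v" by (rule cc[OF v, symmetric])
        finally show "c v = ev (to_ac \<circ> q) (?W v)" by (rule sym)
      qed
      also have "\<dots> = 0" using P ker_iff by blast
      finally show "ev c P = 0" .
    qed
    show ?thesis unfolding c'_def[symmetric]
    proof (intro conjI iffI)
      assume "\<forall>P\<in>?K. ev c P = 0" then show "\<forall>j\<in>{1..r}. beval n c' (s j) = t j i" by (rule AB)
    next
      assume "\<forall>j\<in>{1..r}. beval n c' (s j) = t j i"
      then have "\<exists>q :: nat set \<Rightarrow> bit. \<forall>S. S \<subseteq> {1..n} \<longrightarrow> c' S = badd (fpoly n r id s t i) (bmul n q (ppoly n r id s)) S"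
        by (intro exI[of _ c'] BC)
      then show "\<forall>P\<in>?K. ev c P = 0" by (rule CA)
    next
      assume "\<forall>P\<in>?K. ev c P = 0"
      then have "\<forall>j\<in>{1..r}. beval n c' (s j) = t j i" by (rule AB)
      then have "\<exists>q :: nat set \<Rightarrow> bit. \<forall>S. S \<subseteq> {1..n} \<longrightarrow> c' S = badd (fpoly n r id s t i) (bmul n q (ppoly n r id s)) S"
        by (intro exI[of _ c'] BC)
      then show "\<exists>q :: nat set \<Rightarrow> bit. \<forall>S. S \<subseteq> {1..n} \<longrightarrow> of_ac (c S) = badd (fpoly n r id s t i) (bmul n q (ppoly n r id s)) S"
        by (simp only: c'_def)
    next
      assume "\<exists>q :: nat set \<Rightarrow> bit. \<forall>S. S \<subseteq> {1..n} \<longrightarrow> of_ac (c S) = badd (fpoly n r id s t i) (bmul n q (ppoly n r id s)) S"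
      then have "\<exists>q :: nat set \<Rightarrow> bit. \<forall>S. S \<subseteq> {1..n} \<longrightarrow> c' S = badd (fpoly n r id s t i) (bmul n q (ppoly n r id s)) S"
        by (simp only: c'_def)
      then show "\<forall>P\<in>?K. ev c P = 0" by (rule CA)
    qed
  qed
  show ?thesis
    unfolding ev_def[symmetric]
  proof (intro conjI allI impI)
    show "?K = {P \<in> cring_carrier n. \<forall>b :: nat set \<Rightarrow> F2bar. ev (\<lambda>S. ev b (?W S)) P = 0}" by (rule part1)
  next
    fix c :: "nat set \<Rightarrow> F2bar" assume "\<forall>S. S \<subseteq> {1..n} \<longrightarrow> c S \<in> range to_ac"
    then show "((\<forall>P\<in>?K. ev c P = 0) \<longleftrightarrow> (\<forall>j\<in>{1..r}. beval n (\<lambda>S. of_ac (c S)) (s j) = t j i))" 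
      using part2 by blast
  next
    fix c :: "nat set \<Rightarrow> F2bar" assume "\<forall>S. S \<subseteq> {1..n} \<longrightarrow> c S \<in> range to_ac"
    then show "((\<forall>P\<in>?K. ev c P = 0) \<longleftrightarrow> (\<exists>q :: nat set \<Rightarrow> bit. \<forall>S. S \<subseteq> {1..n} \<longrightarrow>
                     of_ac (c S) = badd (fpoly n r id s t i) (bmul n q (ppoly n r id s)) S))"
      using part2 by blast
  qed
qed


end
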